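(* Let $N=2^\ell$ ($\ell$ a positive integer), $\omega=e^{2\pi\mathbf{i}/N}$, and let $C_2\subseteq C_1\subseteq\mathbb{F}_2^n$ be linear codes with bases $\beta_2\subseteq\beta_1$, respectively, and $Q=Q(C_1,C_2)$. Assume $\beta_1\setminus\beta_2=\{w_1,\ldots,w_K\}$, used as the encoding of $Q$, and let $b\in H_N$. For nonempty $J=\{j_1,\ldots,j_h\}\subseteq[K]$ define $$a_{J,b}=(-2)^{h-1}\, b\cdot(w_{j_1}\star\cdots\star w_{j_h})\bmod N.$$ Then the logical action of $U(b)$ is $$\overline{U(b)}=\prod_{h=1}^K\ \prod_{\substack{J\subseteq[K]\\ |J|=h}} C_J\text{-}U(a_{J,b}).$$
   Context: Vectors of $\mathbb{F}_2^n$ are lifted to $\{0,1\}^n\subseteq\mathbb{Z}_N^n$, $\star$ is the componentwise product, and $b\cdot x=\sum_ib_ix_i\bmod N$. $U(a)=\mathrm{diag}(1,\omega^a)$, $U(b)=\bigotimes_iU(b_i)$. $Q(C_1,C_2)$ is the subspace of $(\mathbb{C}^2)^{\otimes n}$ stabilized by all $X(u)Z(v)$, $u\in C_2$, $v\in C_1^\perp$; $H_N=\{b\in\mathbb{Z}_N^n:U(b)Q=Q\}$. The logical states are $|v\rangle_L=|C_2|^{-1/2}\sum_{u\in C_2}|u+\sum_iv_iw_i\rangle$ for $v\in\mathbb{F}_2^K$, and the logical action of $U$ with $UQ=Q$ is $\mathcal{E}^{-1}U\mathcal{E}$ on $(\mathbb{C}^2)^{\otimes K}$ with $\mathcal{E}:|v\rangle\mapsto|v\rangle_L$.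 For $v\in\mathbb{F}_2^K$ and $J\subseteq[K]$, $v_J=\prod_{i\in J}v_i$, and for $a\in\mathbb{Z}_N$ the controlled gate on $(\mathbb{C}^2)^{\otimes K}$ is $C_J\text{-}U(a)=\sum_{v:\,v_J=0}|v\rangle\langle v|+\omega^a\sum_{v:\,v_J=1}|v\rangle\langle v|$. *)

theory Defs
  imports Complex_Main
begin

text \<open>A vector of F_2^m is a function nat => bool vanishing outside {..<m}.\<close>

definition vecs :: "nat \<Rightarrow> (nat \<Rightarrow> bool) set" where
  "vecs m = {v. \<forall>i\<ge>m. \<not> v i}"

definition vzero :: "nat \<Rightarrow> bool" where
  "vzero = (\<lambda>_. False)"

definition vadd :: "(nat \<Rightarrow> bool) \<Rightarrow> (nat \<Rightarrow> bool) \<Rightarrow> (nat \<Rightarrow> bool)" where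
  "vadd u v = (\<lambda>i. u i \<noteq> v i)"

definition vsum :: "(nat \<Rightarrow> bool) set \<Rightarrow> (nat \<Rightarrow> bool)" where
  "vsum S = (\<lambda>i. odd (card {v\<in>S. v i}))"

text \<open>F_2-span: over F_2 linear combinations are exactly sums of finite subsets.\<close>
definition span2 :: "(nat \<Rightarrow> bool) set \<Rightarrow> (nat \<Rightarrow> bool) set" where
  "span2 B = {vsum S | S. finite S \<and> S \<subseteq> B}"

definition indep2 :: "(nat \<Rightarrow> bool) set \<Rightarrow> bool" where
  "indep2 B \<longleftrightarrow> (\<forall>S. finite S \<and> S \<subseteq> B \<and> vsum S = vzero \<longrightarrow> S = {})"

definition linear_code :: "nat \<Rightarrow> (nat \<Rightarrow> bool) set \<Rightarrow> bool" where
  "linear_code n C \<longleftrightarrow> C \<subseteq> vecs n \<and> vzero \<in> C \<and> (\<forall>u\<in>C. \<forall>v\<in>C. vadd u v \<in> C)"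

definition is_basis2 :: "(nat \<Rightarrow> bool) set \<Rightarrow> (nat \<Rightarrow> bool) set \<Rightarrow> bool" where
  "is_basis2 B C \<longleftrightarrow> B \<subseteq> C \<and> indep2 B \<and> span2 B = C"

definition dual_code :: "nat \<Rightarrow> (nat \<Rightarrow> bool) set \<Rightarrow> (nat \<Rightarrow> bool) set" where
  "dual_code n C = {v \<in> vecs n. \<forall>c\<in>C. even (card {i. i < n \<and> v i \<and> c i})}"

text \<open>A state of m qubits is a function on F_2^m (amplitudes of computational basis
  states), represented as a complex-valued function on nat => bool vanishing outside vecs m.\<close>

type_synonym qstate = "(nat \<Rightarrow> bool) \<Rightarrow> complex"
type_synonym qop = "qstate \<Rightarrow> qstate"

definition is_qstate :: "nat \<Rightarrow> qstate \<Rightarrow> bool" where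
  "is_qstate m \<psi> \<longleftrightarrow> (\<forall>v. v \<notin> vecs m \<longrightarrow> \<psi> v = 0)"

definition ket :: "(nat \<Rightarrow> bool) \<Rightarrow> qstate" where
  "ket y = (\<lambda>x. if x = y then 1 else 0)"

definition omega :: "nat \<Rightarrow> complex" where
  "omega N = cis (2 * pi / real N)"

definition opow :: "nat \<Rightarrow> int \<Rightarrow> complex" where
  "opow N a = omega N ^ nat (a mod int N)"

text \<open>U(b) = tensor product of the single-qubit gates diag(1, omega^(b_i)) on n qubits.\<close>
definition Uop :: "nat \<Rightarrow> nat \<Rightarrow> (nat \<Rightarrow> int) \<Rightarrow> qop" where
  "Uop N n b \<psi> = (\<lambda>x. (\<Prod>i<n. if x i then opow N (b i) else 1) * \<psi> x)"

definition Xop :: "(nat \<Rightarrow> bool) \<Rightarrow> qop" where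
  "Xop u \<psi> = (\<lambda>x. \<psi> (vadd x u))"

definition Zop :: "nat \<Rightarrow> (nat \<Rightarrow> bool) \<Rightarrow> qop" where
  "Zop n v \<psi> = (\<lambda>x. (-1) ^ card {i. i < n \<and> v i \<and> x i} * \<psi> x)"

definition QCSS :: "nat \<Rightarrow> (nat \<Rightarrow> bool) set \<Rightarrow> (nat \<Rightarrow> bool) set \<Rightarrow> qstate set" where
  "QCSS n C1 C2 = {\<psi>. is_qstate n \<psi> \<and>
      (\<forall>u\<in>C2. \<forall>v\<in>dual_code n C1. Xop u (Zop n v \<psi>) = \<psi>)}"

definition H_N :: "nat \<Rightarrow> nat \<Rightarrow> (nat \<Rightarrow> bool) set \<Rightarrow> (nat \<Rightarrow> bool) set \<Rightarrow> (nat \<Rightarrow> int) set" where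
  "H_N N n C1 C2 = {b. (\<forall>i<n. 0 \<le> b i \<and> b i < int N) \<and>
      Uop N n b ` QCSS n C1 C2 = QCSS n C1 C2}"

definition wcomb :: "nat \<Rightarrow> (nat \<Rightarrow> nat \<Rightarrow> bool) \<Rightarrow> (nat \<Rightarrow> bool) \<Rightarrow> (nat \<Rightarrow> bool)" where
  "wcomb K w v = vsum {w i | i. i < K \<and> v i}"

definition logical_state ::
  "(nat \<Rightarrow> bool) set \<Rightarrow> nat \<Rightarrow> (nat \<Rightarrow> nat \<Rightarrow> bool) \<Rightarrow> (nat \<Rightarrow> bool) \<Rightarrow> qstate" where
  "logical_state C2 K w v =
     (\<lambda>x. (\<Sum>u\<in>C2. ket (vadd u (wcomb K w v)) x) / sqrt (real (card C2)))"

definition encode :: "(nat \<Rightarrow> bool) set \<Rightarrow> nat \<Rightarrow> (nat \<Rightarrow> nat \<Rightarrow> bool) \<Rightarrow> qop" where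
  "encode C2 K w \<psi> = (\<lambda>x. \<Sum>v\<in>vecs K. \<psi> v * logical_state C2 K w v x)"

definition logical_action ::
  "(nat \<Rightarrow> bool) set \<Rightarrow> nat \<Rightarrow> (nat \<Rightarrow> nat \<Rightarrow> bool) \<Rightarrow> qop \<Rightarrow> qop" where
  "logical_action C2 K w U \<psi> =
     (THE \<phi>. is_qstate K \<phi> \<and> encode C2 K w \<phi> = U (encode C2 K w \<psi>))"

definition CJU :: "nat \<Rightarrow> nat set \<Rightarrow> int \<Rightarrow> qop" where
  "CJU N J a \<psi> = (\<lambda>v. (if (\<forall>i\<in>J. v i) then opow N a else 1) * \<psi> v)"

definition aJb :: "nat \<Rightarrow> nat \<Rightarrow> (nat \<Rightarrow> nat \<Rightarrow> bool) \<Rightarrow> (nat \<Rightarrow> int) \<Rightarrow> nat set \<Rightarrow> int" where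
  "aJb N n w b J =
     ((-2) ^ (card J - 1) * ((\<Sum>i<n. b i * of_bool (\<forall>j\<in>J. w j i)) mod int N)) mod int N"

definition prod_ops :: "qop list \<Rightarrow> qop" where
  "prod_ops Us = foldr (\<circ>) Us id"

end

theory Submission
  imports Defs
begin

lemma opow_cis: "N > 0 \<Longrightarrow> opow N a = cis (2 * pi * of_int a / real N)"
proof -
  assume N: "N > 0"
  have nn: "real (nat (a mod int N)) = of_int (a mod int N)" using N by simp
  have "opow N a = cis (real (nat (a mod int N)) * (2 * pi / real N))"
    by (simp add: opow_def omega_def DeMoivre)
  also have "\<dots> = cis (2 * pi * of_int (a mod int N) / real N)" unfolding nn by (simp add: field_simps)
  also have "\<dots> = cis (2 * pi * of_int (a mod int N) / real N) * cis (2 * pi * of_int (a div int N))"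
    by simp
  also have "\<dots> = cis (2 * pi * of_int a / real N)"
  proof -
    have "of_int a = (of_int (a mod int N) + of_int (a div int N) * real N :: real)"
      by (metis of_int_add of_int_mult of_int_of_nat_eq mod_div_mult_eq)
    then have "2 * pi * of_int a / real N = 2 * pi * of_int (a mod int N) / real N + 2 * pi * of_int (a div int N)"
      using N by (simp add: field_simps)
    then show ?thesis by (simp only: cis_mult)
  qed
  finally show ?thesis .
qed

lemma opow_add: "N > 0 \<Longrightarrow> opow N (a + c) = opow N a * opow N c"
  by (simp add: opow_cis cis_mult add_divide_distrib distrib_left)

lemma opow_0: "opow N 0 = 1" by (simp add: opow_def)

lemma opow_sum:
  assumes N: "N > 0" and A: "finite A"
  shows "(\<Prod>x\<in>A. opow N (f x)) = opow N (\<Sum>x\<in>A. f x)"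
  using A by (induction A rule: finite_induct) (simp_all add: opow_0 opow_add[OF N])

lemma opow_mod: "a mod int N = c mod int N \<Longrightarrow> opow N a = opow N c"
  by (simp add: opow_def)

lemma if_opow: "(if P then opow N a else 1) = opow N (a * of_bool P)"
  by (simp add: opow_0)

lemma odd_sum_e1:
  assumes T: "finite T"
  shows "(-1::int) ^ card T = (\<Sum>X\<in>Pow T. (-2) ^ card X)"
proof -
  have "(\<Prod>x\<in>T. (-2::int) + 1) = (\<Sum>X\<in>Pow T. (\<Prod>x\<in>X. -2) * (\<Prod>x\<in>T-X. 1))"
    by (rule prod_add[OF T])
  moreover have "(\<Prod>x\<in>T. (-2::int) + 1) = (-1) ^ card T" by simp
  moreover have "(\<Prod>x\<in>X. (-2::int)) * (\<Prod>x\<in>T-X. 1) = (-2) ^ card X" for X by simp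
  ultimately show ?thesis by simp
qed

lemma odd_sum_e2:
  assumes T: "finite T"
  shows "(\<Sum>X\<in>Pow T. (-2::int) ^ card X) = 1 + (\<Sum>X\<in>Pow T - {{}}. (-2) ^ card X)"
proof -
  have "finite (Pow T)" using T by simp
  moreover have "{} \<in> Pow T" by simp
  ultimately have "(\<Sum>X\<in>Pow T. (-2::int) ^ card X) = (-2) ^ card ({}::'a set) + (\<Sum>X\<in>Pow T - {{}}. (-2) ^ card X)"
    by (rule sum.remove)
  then show ?thesis by simp
qed

lemma odd_sum:
  assumes T: "finite T"
  shows "(\<Sum>J\<in>Pow T - {{}}. (-2::int) ^ (card J - 1)) = of_bool (odd (card T))"
proof -
  have "(\<Sum>X\<in>Pow T - {{}}. (-2::int) ^ card X) = (\<Sum>X\<in>Pow T - {{}}. (-2) * (-2) ^ (card X - 1))"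
  proof (rule sum.cong[OF refl])
    fix X assume X: "X \<in> Pow T - {{}}"
    then have "finite X" using T finite_subset by blast
    then have "card X \<noteq> 0" using X by simp
    then show "(-2::int) ^ card X = (-2) * (-2) ^ (card X - 1)"
      by (metis power_eq_if)
  qed
  then have "(-1::int) ^ card T = 1 + (-2) * (\<Sum>X\<in>Pow T - {{}}. (-2) ^ (card X - 1))"
    using odd_sum_e1[OF T] odd_sum_e2[OF T] by (simp add: sum_distrib_left)
  then show ?thesis by (cases "even (card T)") auto
qed

lemma prod_ops_CJU: "distinct Js \<Longrightarrow> prod_ops (map (\<lambda>J. CJU N J (g J)) Js) \<psi> =
   (\<lambda>v. (\<Prod>J\<in>set Js. if \<forall>i\<in>J. v i then opow N (g J) else 1) * \<psi> v)"
proof (induction Js)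
  case Nil then show ?case by (simp add: prod_ops_def)
next
  case (Cons J Js)
  have "prod_ops (map (\<lambda>J. CJU N J (g J)) (J # Js)) \<psi> = CJU N J (g J) (prod_ops (map (\<lambda>J. CJU N J (g J)) Js) \<psi>)"
    by (simp only: prod_ops_def list.map foldr_Cons o_apply)
  also have "\<dots> = CJU N J (g J) (\<lambda>v. (\<Prod>J\<in>set Js. if \<forall>i\<in>J. v i then opow N (g J) else 1) * \<psi> v)"
    using Cons by simp
  also have "\<dots> = (\<lambda>v. (\<Prod>J\<in>set (J # Js). if \<forall>i\<in>J. v i then opow N (g J) else 1) * \<psi> v)"
    using Cons.prems by (simp add: CJU_def mult.assoc)
  finally show ?case .
qed

definition Pph :: "nat \<Rightarrow> nat \<Rightarrow> (nat \<Rightarrow> int) \<Rightarrow> (nat \<Rightarrow> bool) \<Rightarrow> complex" where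
  "Pph N n b x = (\<Prod>i<n. if x i then opow N (b i) else 1)"

lemma wcomb_card:
  assumes winj: "inj_on w {..<K}"
  shows "wcomb K w v i = odd (card {j. j < K \<and> v j \<and> w j i})"
proof -
  have "{u \<in> {w j |j. j < K \<and> v j}. u i} = w ` {j. j < K \<and> v j \<and> w j i}" by blast
  moreover have "inj_on w {j. j < K \<and> v j \<and> w j i}" using winj by (rule inj_on_subset) auto
  ultimately show ?thesis by (simp add: wcomb_def vsum_def card_image)
qed

lemma inner_sum:
  fixes K :: nat
  assumes Js: "F = {J. J \<subseteq> {..<K} \<and> J \<noteq> {}}"
  shows "(\<Sum>J\<in>F. (-2::int) ^ (card J - 1) * of_bool (\<forall>j\<in>J. v j) * of_bool (\<forall>j\<in>J. w j i))
     = of_bool (odd (card {j. j < K \<and> v j \<and> w j i}))"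
proof -
  let ?T = "{j. j < K \<and> v j \<and> w j i}"
  have "F \<subseteq> Pow {..<K}" using Js by auto
  then have fF: "finite F" by (rule finite_subset) simp
  have "(\<Sum>J\<in>F. (-2::int) ^ (card J - 1) * of_bool (\<forall>j\<in>J. v j) * of_bool (\<forall>j\<in>J. w j i))
     = (\<Sum>J\<in>F. if J \<in> Pow ?T then (-2::int) ^ (card J - 1) else 0)"
    by (rule sum.cong[OF refl]) (use Js in auto)
  also have "\<dots> = (\<Sum>J\<in>F \<inter> Pow ?T. (-2::int) ^ (card J - 1))"
    using fF by (rule sum.inter_restrict[symmetric])
  also have "F \<inter> Pow ?T = Pow ?T - {{}}" using Js by auto
  also have "(\<Sum>J\<in>Pow ?T - {{}}. (-2::int) ^ (card J - 1)) = of_bool (odd (card ?T))"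
    by (rule odd_sum) simp
  finally show ?thesis .
qed

lemma phase_eq:
  assumes N: "N > 0" and winj: "inj_on w {..<K}"
    and Js: "F = {J. J \<subseteq> {..<K} \<and> J \<noteq> {}}"
  shows "Pph N n b (wcomb K w v) = (\<Prod>J\<in>F. if \<forall>i\<in>J. v i then opow N (aJb N n w b J) else 1)"
proof -
  let ?x = "wcomb K w v"
  let ?s = "\<lambda>J. (\<Sum>i<n. b i * of_bool (\<forall>j\<in>J. w j i))"
  have "F \<subseteq> Pow {..<K}" using Js by auto
  then have fF: "finite F" by (rule finite_subset) simp
  have L: "Pph N n b ?x = opow N (\<Sum>i<n. b i * of_bool (?x i))"
    unfolding Pph_def if_opow by (rule opow_sum[OF N]) simp
  have R: "(\<Prod>J\<in>F. if \<forall>i\<in>J. v i then opow N (aJb N n w b J) else 1)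
     = opow N (\<Sum>J\<in>F. aJb N n w b J * of_bool (\<forall>i\<in>J. v i))"
    unfolding if_opow by (rule opow_sum[OF N fF])
  have m: "(aJb N n w b J * of_bool (\<forall>i\<in>J. v i)) mod int N
      = ((-2) ^ (card J - 1) * ?s J * of_bool (\<forall>i\<in>J. v i)) mod int N" for J
  proof (cases "\<forall>i\<in>J. v i")
    case True
    then show ?thesis by (simp add: aJb_def mod_mult_right_eq)
  qed auto
  have "(\<Sum>J\<in>F. aJb N n w b J * of_bool (\<forall>i\<in>J. v i)) mod int N
     = (\<Sum>J\<in>F. (aJb N n w b J * of_bool (\<forall>i\<in>J. v i)) mod int N) mod int N"
    by (simp add: mod_sum_eq)
  also have "\<dots> = (\<Sum>J\<in>F. ((-2) ^ (card J - 1) * ?s J * of_bool (\<forall>i\<in>J. v i)) mod int N) mod int N"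
    using m by simp
  also have "\<dots> = (\<Sum>J\<in>F. (-2) ^ (card J - 1) * ?s J * of_bool (\<forall>i\<in>J. v i)) mod int N"
    by (simp add: mod_sum_eq)
  also have "(\<Sum>J\<in>F. (-2) ^ (card J - 1) * ?s J * of_bool (\<forall>i\<in>J. v i))
      = (\<Sum>J\<in>F. \<Sum>i<n. b i * ((-2) ^ (card J - 1) * of_bool (\<forall>j\<in>J. v j) * of_bool (\<forall>j\<in>J. w j i)))"
    by (simp only: sum_distrib_left sum_distrib_right)
      (rule sum.cong[OF refl], rule sum.cong[OF refl], simp only: ac_simps)
  also have "\<dots> = (\<Sum>i<n. \<Sum>J\<in>F. b i * ((-2) ^ (card J - 1) * of_bool (\<forall>j\<in>J. v j) * of_bool (\<forall>j\<in>J. w j i)))"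
    by (rule sum.swap)
  also have "\<dots> = (\<Sum>i<n. b i * of_bool (?x i))"
  proof (rule sum.cong[OF refl])
    fix i
    have "(\<Sum>J\<in>F. b i * ((-2) ^ (card J - 1) * of_bool (\<forall>j\<in>J. v j) * of_bool (\<forall>j\<in>J. w j i)))
       = b i * (\<Sum>J\<in>F. (-2::int) ^ (card J - 1) * of_bool (\<forall>j\<in>J. v j) * of_bool (\<forall>j\<in>J. w j i))"
      by (simp add: sum_distrib_left)
    also have "\<dots> = b i * of_bool (?x i)"
      unfolding inner_sum[OF Js] wcomb_card[OF winj] ..
    finally show "(\<Sum>J\<in>F. b i * ((-2) ^ (card J - 1) * of_bool (\<forall>j\<in>J. v j) * of_bool (\<forall>j\<in>J. w j i)))
       = b i * of_bool (?x i)" .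
  qed
  finally have "(\<Sum>J\<in>F. aJb N n w b J * of_bool (\<forall>i\<in>J. v i)) mod int N = (\<Sum>i<n. b i * of_bool (?x i)) mod int N" .
  then show ?thesis unfolding L R by (intro opow_mod) simp
qed


lemma finite_vecs: "finite (vecs n)"
proof -
  have "vecs n \<subseteq> (\<lambda>S i. i \<in> S) ` Pow {..<n}"
  proof
    fix v assume "v \<in> vecs n"
    then have "v = (\<lambda>i. i \<in> {i. i < n \<and> v i})" by (auto simp: vecs_def not_less[symmetric])
    then show "v \<in> (\<lambda>S i. i \<in> S) ` Pow {..<n}" by blast
  qed
  then show ?thesis by (rule finite_subset) simp
qed

lemma vsum_symdiff:
  assumes "finite A" "finite B"
  shows "vsum ((A - B) \<union> (B - A)) = vadd (vsum A) (vsum B)"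
proof
  fix i
  let ?P = "{v::nat\<Rightarrow>bool. v i}"
  have e: "{v \<in> X. v i} = X \<inter> ?P" for X by auto
  have fa: "finite (A \<inter> ?P)" "finite (B \<inter> ?P)" using assms by auto
  have "card (A \<inter> ?P) + card (B \<inter> ?P) = card ((A \<inter> ?P) \<union> (B \<inter> ?P)) + card ((A \<inter> ?P) \<inter> (B \<inter> ?P))"
    using card_Un_Int[OF fa] by simp
  moreover have "card ((A \<inter> ?P) \<union> (B \<inter> ?P)) = card (((A - B) \<union> (B - A)) \<inter> ?P) + card ((A \<inter> ?P) \<inter> (B \<inter> ?P))"
  proof -
    have "(A \<inter> ?P) \<union> (B \<inter> ?P) = (((A - B) \<union> (B - A)) \<inter> ?P) \<union> ((A \<inter> ?P) \<inter> (B \<inter> ?P))" by auto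
    moreover have "finite (((A - B) \<union> (B - A)) \<inter> ?P)" "finite ((A \<inter> ?P) \<inter> (B \<inter> ?P))" using assms by auto
    moreover have "(((A - B) \<union> (B - A)) \<inter> ?P) \<inter> ((A \<inter> ?P) \<inter> (B \<inter> ?P)) = {}" by auto
    ultimately show ?thesis by (simp add: card_Un_disjoint)
  qed
  ultimately have "card (A \<inter> ?P) + card (B \<inter> ?P) = card (((A - B) \<union> (B - A)) \<inter> ?P) + 2 * card ((A \<inter> ?P) \<inter> (B \<inter> ?P))" by simp
  then have "odd (card (((A - B) \<union> (B - A)) \<inter> ?P)) = (odd (card (A \<inter> ?P)) \<noteq> odd (card (B \<inter> ?P)))"
    by (metis even_add even_mult_iff even_numeral)
  then show "vsum ((A - B) \<union> (B - A)) i = vadd (vsum A) (vsum B) i"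
    unfolding vsum_def vadd_def e .
qed

lemma vsum_disj:
  assumes "finite A" "finite B" "A \<inter> B = {}"
  shows "vsum (A \<union> B) = vadd (vsum A) (vsum B)"
proof -
  have "(A - B) \<union> (B - A) = A \<union> B" using assms(3) by auto
  then show ?thesis using vsum_symdiff[OF assms(1,2)] by simp
qed

lemma vadd_assoc: "vadd (vadd a b) c = vadd a (vadd b c)" by (auto simp: vadd_def)
lemma vadd_comm: "vadd a b = vadd b a" by (auto simp: vadd_def)
lemma vadd_self: "vadd a a = vzero" by (auto simp: vadd_def vzero_def)
lemma vadd_zero[simp]: "vadd a vzero = a" "vadd vzero a = a" by (auto simp: vadd_def vzero_def)
lemma vadd_cancel: "vadd (vadd a b) b = a" by (auto simp: vadd_def)
lemma vadd_cancel2: "vadd a (vadd a b) = b" by (auto simp: vadd_def)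

lemma vsum_empty[simp]: "vsum {} = vzero" by (simp add: vsum_def vzero_def)

lemma vsum_in_span: "finite S \<Longrightarrow> S \<subseteq> B \<Longrightarrow> vsum S \<in> span2 B"
  by (auto simp: span2_def)


context
  fixes n K :: nat and C1 C2 B1 B2 :: "(nat \<Rightarrow> bool) set" and w :: "nat \<Rightarrow> nat \<Rightarrow> bool"
  assumes lc1: "linear_code n C1" and lc2: "linear_code n C2" and sub: "C2 \<subseteq> C1"
    and bas1: "is_basis2 B1 C1" and bas2: "is_basis2 B2 C2" and bsub: "B2 \<subseteq> B1"
    and winj: "inj_on w {..<K}" and wB: "B1 - B2 = w ` {..<K}"
begin

lemma C2_fin: "finite C2" using lc2 finite_vecs[of n] by (auto simp: linear_code_def intro: finite_subset)
lemma C2_zero: "vzero \<in> C2" using lc2 by (auto simp: linear_code_def)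
lemma C2_card: "card C2 > 0" using C2_fin C2_zero card_gt_0_iff by blast
lemma C2_add: "u \<in> C2 \<Longrightarrow> u' \<in> C2 \<Longrightarrow> vadd u u' \<in> C2" using lc2 by (auto simp: linear_code_def)
lemma C1_add: "u \<in> C1 \<Longrightarrow> u' \<in> C1 \<Longrightarrow> vadd u u' \<in> C1" using lc1 by (auto simp: linear_code_def)
lemma C2_vecs: "C2 \<subseteq> vecs n" using lc2 by (auto simp: linear_code_def)
lemma C1_vecs: "C1 \<subseteq> vecs n" using lc1 by (auto simp: linear_code_def)

lemma wcomb_C1: "wcomb K w v \<in> C1"
proof -
  have "{w i | i. i < K \<and> v i} \<subseteq> B1" using wB by auto
  moreover have "finite {w i | i. i < K \<and> v i}" by simp
  ultimately show ?thesis using bas1 vsum_in_span unfolding wcomb_def is_basis2_def by blast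
qed

lemma ls_eq: "logical_state C2 K w v x =
   (if vadd x (wcomb K w v) \<in> C2 then 1 else 0) / sqrt (real (card C2))"
proof -
  have "(\<Sum>u\<in>C2. ket (vadd u (wcomb K w v)) x) = (\<Sum>u\<in>C2. if u = vadd x (wcomb K w v) then 1 else 0)"
    by (rule sum.cong) (auto simp: ket_def vadd_def)
  also have "\<dots> = (if vadd x (wcomb K w v) \<in> C2 then 1 else 0)"
    using C2_fin by (simp add: sum.delta')
  finally show ?thesis by (simp add: logical_state_def)
qed

lemma wcomb_diff:
  assumes v: "v \<in> vecs K" and v': "v' \<in> vecs K" and d: "vadd (wcomb K w v) (wcomb K w v') \<in> C2"
  shows "v = v'"
proof -
  let ?A = "{w i | i. i < K \<and> v i}" and ?B = "{w i | i. i < K \<and> v' i}"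
  let ?D = "{w i | i. i < K \<and> v i \<noteq> v' i}"
  have D: "(?A - ?B) \<union> (?B - ?A) = ?D"
  proof -
    have "w i = w j \<Longrightarrow> i < K \<Longrightarrow> j < K \<Longrightarrow> i = j" for i j using winj by (auto dest: inj_onD)
    then show ?thesis by blast
  qed
  have "vsum ?D \<in> C2" using d vsum_symdiff[of ?A ?B] D by (simp add: wcomb_def)
  then obtain S where S: "finite S" "S \<subseteq> B2" "vsum ?D = vsum S"
    using bas2 by (auto simp: is_basis2_def span2_def)
  have DB: "?D \<subseteq> B1 - B2" using wB by auto
  have "?D \<inter> S = {}" using DB S(2) by auto
  then have "vsum (?D \<union> S) = vadd (vsum ?D) (vsum S)" using S(1) by (intro vsum_disj) auto
  also have "\<dots> = vzero" using S(3) vadd_self by simp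
  finally have z: "vsum (?D \<union> S) = vzero" .
  have "finite (?D \<union> S)" using S(1) by simp
  moreover have "?D \<union> S \<subseteq> B1" using DB S(2) bsub by blast
  ultimately have "?D \<union> S = {}" using bas1 z unfolding is_basis2_def indep2_def by blast
  then have "?D = {}" by simp
  then have "\<forall>i<K. v i = v' i" by blast
  moreover have "\<forall>i\<ge>K. v i = v' i" using v v' by (auto simp: vecs_def)
  ultimately show ?thesis by (intro ext) (metis not_le)
qed

lemma ls_Q: "logical_state C2 K w v \<in> QCSS n C1 C2"
proof -
  let ?c = "wcomb K w v"
  have vecsadd: "a \<in> vecs n \<Longrightarrow> b \<in> vecs n \<Longrightarrow> vadd a b \<in> vecs n" for a b by (auto simp: vecs_def vadd_def)
  have cC1: "?c \<in> C1" by (rule wcomb_C1)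
  have q: "is_qstate n (logical_state C2 K w v)"
    unfolding is_qstate_def
  proof (intro allI impI)
    fix x assume x: "x \<notin> vecs n"
    show "logical_state C2 K w v x = 0"
    proof (cases "vadd x ?c \<in> C2")
      case True
      then have "vadd (vadd x ?c) ?c \<in> vecs n" using vecsadd C2_vecs C1_vecs cC1 by blast
      then show ?thesis using x vadd_cancel by metis
    qed (simp add: ls_eq)
  qed
  have "Xop u (Zop n v' (logical_state C2 K w v)) = logical_state C2 K w v"
    if u: "u \<in> C2" and v': "v' \<in> dual_code n C1" for u v'
  proof
    fix x
    let ?y = "vadd x u"
    have iff: "(vadd ?y ?c \<in> C2) = (vadd x ?c \<in> C2)"
    proof
      assume "vadd ?y ?c \<in> C2"
      then have "vadd (vadd ?y ?c) u \<in> C2" using u C2_add by blast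
      moreover have "vadd (vadd ?y ?c) u = vadd x ?c" by (auto simp: vadd_def)
      ultimately show "vadd x ?c \<in> C2" by simp
    next
      assume "vadd x ?c \<in> C2"
      then have "vadd (vadd x ?c) u \<in> C2" using u C2_add by blast
      moreover have "vadd (vadd x ?c) u = vadd ?y ?c" by (auto simp: vadd_def)
      ultimately show "vadd ?y ?c \<in> C2" by simp
    qed
    show "Xop u (Zop n v' (logical_state C2 K w v)) x = logical_state C2 K w v x"
    proof (cases "vadd x ?c \<in> C2")
      case True
      then have "vadd ?y ?c \<in> C1" using iff sub by blast
      then have "vadd (vadd ?y ?c) ?c \<in> C1" using cC1 C1_add by blast
      then have "?y \<in> C1" using vadd_cancel by metis
      then have "even (card {i. i < n \<and> v' i \<and> ?y i})" using v' by (auto simp: dual_code_def)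
      then show ?thesis using True iff by (simp add: Xop_def Zop_def ls_eq)
    next
      case False
      then show ?thesis using iff by (simp add: Xop_def Zop_def ls_eq)
    qed
  qed
  then show ?thesis using q by (simp add: QCSS_def)
qed

lemma Q_inv: "\<psi> \<in> QCSS n C1 C2 \<Longrightarrow> u \<in> C2 \<Longrightarrow> \<psi> (vadd x u) = \<psi> x"
proof -
  assume p: "\<psi> \<in> QCSS n C1 C2" and u: "u \<in> C2"
  have "vzero \<in> dual_code n C1" by (simp add: dual_code_def vecs_def vzero_def)
  then have "Xop u (Zop n vzero \<psi>) = \<psi>" using p u by (auto simp: QCSS_def)
  moreover have "Zop n vzero \<psi> = \<psi>" by (simp add: Zop_def vzero_def)
  ultimately show ?thesis by (metis Xop_def)
qed



lemma ls_at_c: "u \<in> C2 \<Longrightarrow> logical_state C2 K w v (vadd (wcomb K w v) u) = 1 / sqrt (real (card C2))"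
proof -
  assume u: "u \<in> C2"
  have "vadd (vadd (wcomb K w v) u) (wcomb K w v) = u" by (auto simp: vadd_def)
  then show ?thesis using u by (simp add: ls_eq)
qed

lemma P_inv:
  assumes bH: "b \<in> H_N N n C1 C2" and x: "vadd x (wcomb K w v) \<in> C2"
  shows "Pph N n b x = Pph N n b (wcomb K w v)"
proof -
  let ?c = "wcomb K w v" and ?u = "vadd x (wcomb K w v)"
  have "Uop N n b (logical_state C2 K w v) \<in> QCSS n C1 C2" using bH ls_Q by (auto simp: H_N_def)
  then have E: "Uop N n b (logical_state C2 K w v) (vadd ?c ?u) = Uop N n b (logical_state C2 K w v) (vadd ?c vzero)"
    using Q_inv x C2_zero by metis
  have cx: "vadd ?c ?u = x" by (auto simp: vadd_def)
  have "logical_state C2 K w v (vadd ?c ?u) = 1 / sqrt (real (card C2))" by (rule ls_at_c[OF x])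
  then have l1: "logical_state C2 K w v x = 1 / sqrt (real (card C2))" unfolding cx .
  have l2: "logical_state C2 K w v ?c = 1 / sqrt (real (card C2))" using ls_at_c[OF C2_zero] by simp
  have "Pph N n b x * (1 / sqrt (real (card C2))) = Pph N n b ?c * (1 / sqrt (real (card C2)))"
    using E unfolding cx vadd_zero Uop_def Pph_def[symmetric] l1 l2 .
  moreover have "sqrt (real (card C2)) \<noteq> 0" using C2_card by simp
  ultimately show ?thesis by simp
qed

lemma U_encode:
  assumes bH: "b \<in> H_N N n C1 C2"
  shows "Uop N n b (encode C2 K w \<psi>) = encode C2 K w (\<lambda>v. Pph N n b (wcomb K w v) * \<psi> v)"
proof
  fix x
  have h: "Pph N n b x * (\<psi> v * logical_state C2 K w v x) = Pph N n b (wcomb K w v) * \<psi> v * logical_state C2 K w v x" for v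
  proof (cases "vadd x (wcomb K w v) \<in> C2")
    case True then show ?thesis using P_inv[OF bH True] by simp
  qed (simp add: ls_eq)
  show "Uop N n b (encode C2 K w \<psi>) x = encode C2 K w (\<lambda>v. Pph N n b (wcomb K w v) * \<psi> v) x"
    unfolding Uop_def encode_def sum_distrib_left Pph_def[symmetric]
    by (rule sum.cong[OF refl]) (simp add: h mult.assoc)
qed

lemma encode_at:
  assumes v0: "v0 \<in> vecs K"
  shows "encode C2 K w \<phi> (wcomb K w v0) = \<phi> v0 / sqrt (real (card C2))"
proof -
  have "\<phi> v * logical_state C2 K w v (wcomb K w v0) = (if v = v0 then \<phi> v0 / sqrt (real (card C2)) else 0)"
    if v: "v \<in> vecs K" for v
  proof (cases "v = v0")
    case True then show ?thesis using C2_zero by (simp add: ls_eq vadd_self)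
  next
    case False
    then have "vadd (wcomb K w v0) (wcomb K w v) \<notin> C2" using wcomb_diff[OF v0 v] by blast
    then show ?thesis using False by (simp add: ls_eq)
  qed
  then have "encode C2 K w \<phi> (wcomb K w v0) = (\<Sum>v\<in>vecs K. if v = v0 then \<phi> v0 / sqrt (real (card C2)) else 0)"
    unfolding encode_def by (rule sum.cong[OF refl])
  also have "\<dots> = \<phi> v0 / sqrt (real (card C2))" using v0 finite_vecs[of K] by (simp add: sum.delta')
  finally show ?thesis .
qed

lemma encode_inj:
  assumes "is_qstate K \<phi>1" "is_qstate K \<phi>2" "encode C2 K w \<phi>1 = encode C2 K w \<phi>2"
  shows "\<phi>1 = \<phi>2"
proof
  fix v
  show "\<phi>1 v = \<phi>2 v"
  proof (cases "v \<in> vecs K")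
    case True
    have "sqrt (real (card C2)) \<noteq> 0" using C2_card by simp
    then show ?thesis using encode_at[OF True, of \<phi>1] encode_at[OF True, of \<phi>2] assms(3) by simp
  next
    case False then show ?thesis using assms(1,2) by (simp add: is_qstate_def)
  qed
qed

lemma logical_U:
  assumes bH: "b \<in> H_N N n C1 C2" and q: "is_qstate K \<psi>"
  shows "logical_action C2 K w (Uop N n b) \<psi> = (\<lambda>v. Pph N n b (wcomb K w v) * \<psi> v)"
proof -
  let ?c = "\<lambda>v. Pph N n b (wcomb K w v) * \<psi> v"
  have q2: "is_qstate K ?c" using q unfolding is_qstate_def by simp
  have e: "encode C2 K w ?c = Uop N n b (encode C2 K w \<psi>)" using U_encode[OF bH] by simp
  show ?thesis
    unfolding logical_action_def
  proof (rule the_equality)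
    show "is_qstate K ?c \<and> encode C2 K w ?c = Uop N n b (encode C2 K w \<psi>)" using q2 e by blast
  next
    fix \<phi> assume a: "is_qstate K \<phi> \<and> encode C2 K w \<phi> = Uop N n b (encode C2 K w \<psi>)"
    show "\<phi> = ?c" using encode_inj[of \<phi> ?c] a q2 e by simp
  qed
qed

end


theorem proposition3p13:
  fixes l n K N :: nat and C1 C2 B1 B2 :: "(nat \<Rightarrow> bool) set"
    and w :: "nat \<Rightarrow> nat \<Rightarrow> bool" and b :: "nat \<Rightarrow> int"
    and Js :: "nat set list"
  assumes "l \<ge> 1" and "N = 2 ^ l"
    and "linear_code n C1" and "linear_code n C2" and "C2 \<subseteq> C1"
    and "is_basis2 B1 C1" and "is_basis2 B2 C2" and "B2 \<subseteq> B1"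
    and "inj_on w {..<K}" and "B1 - B2 = w ` {..<K}"
    and "b \<in> H_N N n C1 C2"
    and "distinct Js" and "set Js = {J. J \<subseteq> {..<K} \<and> J \<noteq> {}}"
    and "sorted (map card Js)"
  shows "\<forall>\<psi>. is_qstate K \<psi> \<longrightarrow>
     logical_action C2 K w (Uop N n b) \<psi> =
     prod_ops (map (\<lambda>J. CJU N J (aJb N n w b J)) Js) \<psi>"
proof (intro allI impI)
  fix \<psi> assume q: "is_qstate K \<psi>"
  have N: "N > 0" using assms(2) by simp
  have LA: "logical_action C2 K w (Uop N n b) \<psi> = (\<lambda>v. Pph N n b (wcomb K w v) * \<psi> v)"
    by (rule logical_U[OF assms(3-10) assms(11) q])
  have RA: "prod_ops (map (\<lambda>J. CJU N J (aJb N n w b J)) Js) \<psi>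
     = (\<lambda>v. (\<Prod>J\<in>set Js. if \<forall>i\<in>J. v i then opow N (aJb N n w b J) else 1) * \<psi> v)"
    by (rule prod_ops_CJU[OF assms(12)])
  show "logical_action C2 K w (Uop N n b) \<psi> = prod_ops (map (\<lambda>J. CJU N J (aJb N n w b J)) Js) \<psi>"
    unfolding LA RA using phase_eq[OF N assms(9) assms(13)] by simp
qed

end
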